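(* For all terms $M,M'$: if $M\bullet\iota\equiv M'\bullet\iota$ then $M\sim_\alpha M'$.
   Context: Let $\mathcal V$ (the variables) be a type with decidable equality, equipped with functions $\mathrm{encode}:\mathcal V\to\mathbb N$ and $\mathrm{decode}:\mathbb N\to\mathcal V$ such that $\mathrm{encode}(\mathrm{decode}\,n)=n$ for all $n$. Let $\mathcal C$ (the constants) be any type. Terms $\Lambda$ are generated by: $c\,k$ ($k\in\mathcal C$), $v\,x$ ($x\in\mathcal V$), $\lambda[x:A]M$, $\Pi[x:A]B$ and $M\cdot N$; in $\lambda[x:A]M$ and $\Pi[x:A]B$ the name $x$ binds in $M$ (resp. $B$) but not in $A$. Terms are raw first-order syntax (not identified up to renaming of bound variables) and $\equiv$ denotes syntactic identity. The list of free variables is $\mathrm{fv}(c\,k)=[\,]$, $\mathrm{fv}(v\,x)=[x]$, $\mathrm{fv}(\lambda[x:A]M)=\mathrm{fv}\,A\mathbin{+\!\!+}(\mathrm{fv}\,M-x)$, $\mathrm{fv}(\Pi[x:A]B)=\mathrm{fv}\,A\mathbin{+\!\!+}(\mathrm{fv}\,B-x)$, $\mathrm{fv}(M\cdot N)=\mathrm{fv}\,M\mathbin{+\!\!+}\mathrm{fv}\,N$, where $\mathbin{+\!\!+}$ is list concatenation and $xs-x$ deletes every occurrence of $x$ from $xs$. Fix a function $\chi':\mathrm{List}\,\mathbb N\to\mathbb N$ with $\chi'(ns)\notin ns$ for every list $ns$, and put $X'(xs)=\mathrm{decode}(\chi'(\mathrm{map}\ \mathrm{encode}\ xs))$. A substitution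 is any function $\sigma:\mathcal V\to\Lambda$; $\iota=v$ is the identity substitution; $(\sigma,x:=N)(y)=N$ if $y=x$ and $\sigma\,y$ otherwise. For a substitution $\sigma$ and a list $xs$ of variables, $X(\sigma,xs)=X'(\text{concatenation of the lists }\mathrm{fv}(\sigma\,y)\text{ for }y\in xs)$. The action $M\bullet\sigma$ is defined by structural recursion: $c\,k\bullet\sigma=c\,k$; $v\,x\bullet\sigma=\sigma\,x$; $(M\cdot N)\bullet\sigma=(M\bullet\sigma)\cdot(N\bullet\sigma)$; $(\lambda[x:A]M)\bullet\sigma=\lambda[y:A\bullet\sigma](M\bullet(\sigma,x:=v\,y))$ with $y=X(\sigma,\mathrm{fv}\,M-x)$; $(\Pi[x:A]B)\bullet\sigma=\Pi[y:A\bullet\sigma](B\bullet(\sigma,x:=v\,y))$ with $y=X(\sigma,\mathrm{fv}\,B-x)$. Unary substitution is $M[x:=N]=M\bullet(\iota,x:=N)$. $\alpha$-conversion $\sim_\alpha$ is the inductively defined relation with rules: $c\,k\sim_\alpha c\,k$; $v\,x\sim_\alpha v\,x$; $M\cdot N\sim_\alpha M'\cdot N'$ if $M\sim_\alpha M'$ and $N\sim_\alpha N'$; $\lambda[x:A]M\sim_\alpha\lambda[x':A']M'$ if $A\sim_\alpha A'$ and there is a variable $y$ with $y\notin\mathrm{fv}\,M-x$, $y\notin\mathrm{fv}\,M'-x'$ and $M[x:=v\,y]\equiv M'[x':=v\,y]$; and the same rule with $\Pi$ in place of $\lambda$. *)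

theory Defs
  imports Main
begin

text \<open>Raw first-order terms: constants, variables, lambda, Pi, application.
  In Lam x A M and Pi x A B the name x binds in M (resp. B) but not in A.\<close>
datatype ('c, 'v) trm =
    Const 'c
  | Var 'v
  | Lam 'v "('c, 'v) trm" "('c, 'v) trm"
  | Pi 'v "('c, 'v) trm" "('c, 'v) trm"
  | App "('c, 'v) trm" "('c, 'v) trm"

primrec fv :: "('c, 'v) trm \<Rightarrow> 'v list" where
  "fv (Const k) = []"
| "fv (Var x) = [x]"
| "fv (Lam x A M) = fv A @ removeAll x (fv M)"
| "fv (Pi x A B) = fv A @ removeAll x (fv B)"
| "fv (App M N) = fv M @ fv N"

definition fresh' :: "('v \<Rightarrow> nat) \<Rightarrow> (nat \<Rightarrow> 'v) \<Rightarrow> (nat list \<Rightarrow> nat) \<Rightarrow> 'v list \<Rightarrow> 'v" where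
  "fresh' enc dec chi xs = dec (chi (map enc xs))"

definition fresh :: "('v \<Rightarrow> nat) \<Rightarrow> (nat \<Rightarrow> 'v) \<Rightarrow> (nat list \<Rightarrow> nat)
    \<Rightarrow> ('v \<Rightarrow> ('c, 'v) trm) \<Rightarrow> 'v list \<Rightarrow> 'v" where
  "fresh enc dec chi \<sigma> xs = fresh' enc dec chi (concat (map (\<lambda>y. fv (\<sigma> y)) xs))"

text \<open>The action M \<bullet> sigma (capture-avoiding simultaneous substitution).\<close>
primrec sbst :: "('v \<Rightarrow> nat) \<Rightarrow> (nat \<Rightarrow> 'v) \<Rightarrow> (nat list \<Rightarrow> nat)
    \<Rightarrow> ('c, 'v) trm \<Rightarrow> ('v \<Rightarrow> ('c, 'v) trm) \<Rightarrow> ('c, 'v) trm" where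
  "sbst enc dec chi (Const k) \<sigma> = Const k"
| "sbst enc dec chi (Var x) \<sigma> = \<sigma> x"
| "sbst enc dec chi (App M N) \<sigma> = App (sbst enc dec chi M \<sigma>) (sbst enc dec chi N \<sigma>)"
| "sbst enc dec chi (Lam x A M) \<sigma> =
     (let y = fresh enc dec chi \<sigma> (removeAll x (fv M))
      in Lam y (sbst enc dec chi A \<sigma>) (sbst enc dec chi M (\<sigma>(x := Var y))))"
| "sbst enc dec chi (Pi x A B) \<sigma> =
     (let y = fresh enc dec chi \<sigma> (removeAll x (fv B))
      in Pi y (sbst enc dec chi A \<sigma>) (sbst enc dec chi B (\<sigma>(x := Var y))))"

text \<open>Unary substitution M[x := N] = M \<bullet> (iota, x := N), with iota = Var.\<close>
definition usubst :: "('v \<Rightarrow> nat) \<Rightarrow> (nat \<Rightarrow> 'v) \<Rightarrow> (nat list \<Rightarrow> nat)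
    \<Rightarrow> ('c, 'v) trm \<Rightarrow> 'v \<Rightarrow> ('c, 'v) trm \<Rightarrow> ('c, 'v) trm" where
  "usubst enc dec chi M x N = sbst enc dec chi M (Var(x := N))"

inductive alpha :: "('v \<Rightarrow> nat) \<Rightarrow> (nat \<Rightarrow> 'v) \<Rightarrow> (nat list \<Rightarrow> nat)
    \<Rightarrow> ('c, 'v) trm \<Rightarrow> ('c, 'v) trm \<Rightarrow> bool"
  for enc dec chi where
  alpha_const: "alpha enc dec chi (Const k) (Const k)"
| alpha_var: "alpha enc dec chi (Var x) (Var x)"
| alpha_app: "alpha enc dec chi M M' \<Longrightarrow> alpha enc dec chi N N'
     \<Longrightarrow> alpha enc dec chi (App M N) (App M' N')"
| alpha_lam: "alpha enc dec chi A A' \<Longrightarrow> y \<notin> set (removeAll x (fv M))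
     \<Longrightarrow> y \<notin> set (removeAll x' (fv M'))
     \<Longrightarrow> usubst enc dec chi M x (Var y) = usubst enc dec chi M' x' (Var y)
     \<Longrightarrow> alpha enc dec chi (Lam x A M) (Lam x' A' M')"
| alpha_pi: "alpha enc dec chi A A' \<Longrightarrow> y \<notin> set (removeAll x (fv B))
     \<Longrightarrow> y \<notin> set (removeAll x' (fv B'))
     \<Longrightarrow> usubst enc dec chi B x (Var y) = usubst enc dec chi B' x' (Var y)
     \<Longrightarrow> alpha enc dec chi (Pi x A B) (Pi x' A' B')"

end

theory Submission
  imports Defs
begin

lemma concat_fv_Var: "concat (map (\<lambda>y. fv (Var y :: ('c,'v) trm)) xs) = (xs :: 'v list)"
  by (induction xs) auto

lemma fresh_Var_notin:
  assumes enc_dec: "\<And>n. enc (dec n) = n"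
    and chi_fresh: "\<And>ns. chi ns \<notin> set ns"
  shows "fresh enc dec chi (Var :: 'v \<Rightarrow> ('c,'v) trm) xs \<notin> set xs"
proof
  assume h: "fresh enc dec chi (Var :: 'v \<Rightarrow> ('c,'v) trm) xs \<in> set xs"
  have "fresh enc dec chi (Var :: 'v \<Rightarrow> ('c,'v) trm) xs = dec (chi (map enc xs))"
    unfolding fresh_def fresh'_def by (simp only: concat_fv_Var)
  with h have "enc (dec (chi (map enc xs))) \<in> set (map enc xs)" by simp
  then show False by (metis chi_fresh enc_dec)
qed

theorem mainTheorem3:
  fixes enc :: "'v \<Rightarrow> nat" and dec :: "nat \<Rightarrow> 'v" and chi :: "nat list \<Rightarrow> nat"
    and M M' :: "('c, 'v) trm"
  assumes enc_dec: "\<And>n. enc (dec n) = n"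
    and chi_fresh: "\<And>ns. chi ns \<notin> set ns"
    and eq: "sbst enc dec chi M Var = sbst enc dec chi M' Var"
  shows "alpha enc dec chi M M'"
  using eq
proof (induction M arbitrary: M')
  case (Const k)
  then show ?case by (cases M') (auto simp: Let_def intro: alpha.intros)
next
  case (Var x)
  then show ?case by (cases M') (auto simp: Let_def intro: alpha.intros)
next
  case (App M1 M2)
  then show ?case by (cases M') (auto simp: Let_def intro: alpha.intros)
next
  case (Lam x A B)
  show ?case
  proof (cases M')
    case (Lam x' A' B')
    let ?y = "fresh enc dec chi (Var :: 'v \<Rightarrow> ('c,'v) trm) (removeAll x (fv B))"
    let ?y' = "fresh enc dec chi (Var :: 'v \<Rightarrow> ('c,'v) trm) (removeAll x' (fv B'))"
    have e0: "?y = ?y' \<and> sbst enc dec chi A Var = sbst enc dec chi A' Var \<and>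
      sbst enc dec chi B (Var(x := Var ?y)) = sbst enc dec chi B' (Var(x' := Var ?y'))"
      using Lam.prems unfolding Lam sbst.simps Let_def trm.inject .
    have e: "?y = ?y'" "sbst enc dec chi A Var = sbst enc dec chi A' Var"
      "sbst enc dec chi B (Var(x := Var ?y)) = sbst enc dec chi B' (Var(x' := Var ?y'))"
      using e0 by blast+
    show ?thesis unfolding Lam
      apply (rule alpha_lam[where y = ?y])
         apply (rule Lam.IH(1)[OF e(2)])
        apply (rule fresh_Var_notin[where enc=enc and dec=dec and chi=chi], fact enc_dec, fact chi_fresh)
       apply (subst e(1), rule fresh_Var_notin[where enc=enc and dec=dec and chi=chi], fact enc_dec, fact chi_fresh)
      using e(3) unfolding e(1)[symmetric] usubst_def .
  qed (use Lam.prems in \<open>auto simp: Let_def\<close>)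
next
  case (Pi x A B)
  show ?case
  proof (cases M')
    case (Pi x' A' B')
    let ?y = "fresh enc dec chi (Var :: 'v \<Rightarrow> ('c,'v) trm) (removeAll x (fv B))"
    let ?y' = "fresh enc dec chi (Var :: 'v \<Rightarrow> ('c,'v) trm) (removeAll x' (fv B'))"
    have e0: "?y = ?y' \<and> sbst enc dec chi A Var = sbst enc dec chi A' Var \<and>
      sbst enc dec chi B (Var(x := Var ?y)) = sbst enc dec chi B' (Var(x' := Var ?y'))"
      using Pi.prems unfolding Pi sbst.simps Let_def trm.inject .
    have e: "?y = ?y'" "sbst enc dec chi A Var = sbst enc dec chi A' Var"
      "sbst enc dec chi B (Var(x := Var ?y)) = sbst enc dec chi B' (Var(x' := Var ?y'))"
      using e0 by blast+
    show ?thesis unfolding Pi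
      apply (rule alpha_pi[where y = ?y])
         apply (rule Pi.IH(1)[OF e(2)])
        apply (rule fresh_Var_notin[where enc=enc and dec=dec and chi=chi], fact enc_dec, fact chi_fresh)
       apply (subst e(1), rule fresh_Var_notin[where enc=enc and dec=dec and chi=chi], fact enc_dec, fact chi_fresh)
      using e(3) unfolding e(1)[symmetric] usubst_def .
  qed (use Pi.prems in \<open>auto simp: Let_def\<close>)
qed

end
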